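(* Fix $k\in\mathbb{N}$, let $m=\bigl[\frac{k+1}2\bigr]$, write $\bar c_k(a):=c_k^{\mathrm{EH}}(E(a,1))/(m\pi)$ for $a\in(0,1]$, and for $l=1,\dots,m$ let $[a_l,b_l]$ denote the interval of those $a$ on which $\bar c_k(a)=\frac lm$. For a normalized generalized symplectic capacity $c$ on $\mathit{Ell}^4$ write $c(a):=c(E(a,1))$. Then: (a) $\bar c_k(a)\le c(a)$ for all $a\in(0,1]$, for every such $c$ satisfying $\bar c_k(a_l)\le c(a_l)$ for all $l=1,\dots,\bigl[\frac{k+1}2\bigr]$; (b) $\bar c_k(a)\ge c(a)$ for all $a\in(0,1]$, for every such $c$ satisfying $\bar c_k(b_l)\ge c(b_l)$ for all $l=1,\dots,\bigl[\frac k2\bigr]$ and $\lim_{a\to0}\frac{c(a)}{a}\le\frac{k}{[\frac{k+1}2]}$.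
   Context: $E(a_1,a_2)=\{z\in\mathbb{C}^2:|z_1|^2/a_1+|z_2|^2/a_2<1\}$, $0<a_1\le a_2\le\infty$. $\mathit{Ell}^4$ is the category of ellipsoids in $(\mathbb{R}^4,\omega_0)$ with morphisms the symplectic embeddings induced by global symplectomorphisms of $\mathbb{R}^4$, where $(U,\alpha^2\omega_0)$ is identified with $\alpha U$. A generalized symplectic capacity is a map $c:\mathit{Ell}^4\to[0,\infty]$ with $c(U)\le c(V)$ whenever there is a morphism $U\to V$ and $c(\alpha U)=\alpha^2c(U)$ for $\alpha>0$; it is normalized if $c(E(1,1))=1$. Ekeland–Hofer capacities on ellipsoids: writing the numbers $j a_i\pi$ ($j\in\mathbb{N}$, $i=1,2$) in increasing order with repetitions as $d_1\le d_2\le\dots$, $c_k^{\mathrm{EH}}(E(a_1,a_2))=d_k$. $[x]$ is the largest integer $\le x$. *)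

theory Defs
  imports "HOL-Analysis.Analysis"
begin

type_synonym C2 = "complex \<times> complex"

text \<open>Standard symplectic form on C^2 = R^4: omega0 = dx1 wedge dy1 + dx2 wedge dy2.\<close>
definition omega0 :: "C2 \<Rightarrow> C2 \<Rightarrow> real" where
  "omega0 u v = Im (cnj (fst u) * fst v) + Im (cnj (snd u) * snd v)"

fun iter_dderiv :: "'a::real_normed_vector list \<Rightarrow> ('a \<Rightarrow> 'b::real_normed_vector) \<Rightarrow> 'a \<Rightarrow> 'b" where
  "iter_dderiv [] f = f"
| "iter_dderiv (v # vs) f = (\<lambda>x. frechet_derivative (iter_dderiv vs f) (at x) v)"

definition smooth_map :: "('a::real_normed_vector \<Rightarrow> 'b::real_normed_vector) \<Rightarrow> bool" where
  "smooth_map f \<longleftrightarrow> (\<forall>vs x. iter_dderiv vs f differentiable (at x))"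

definition symplectomorphism :: "(C2 \<Rightarrow> C2) \<Rightarrow> bool" where
  "symplectomorphism \<phi> \<longleftrightarrow> bij \<phi> \<and> smooth_map \<phi> \<and> smooth_map (inv \<phi>) \<and>
     (\<forall>x u v. omega0 (frechet_derivative \<phi> (at x) u) (frechet_derivative \<phi> (at x) v) = omega0 u v)"

definition ellipsoid :: "real \<Rightarrow> ereal \<Rightarrow> C2 set" where
  "ellipsoid a1 a2 = {z. (cmod (fst z))\<^sup>2 / a1
      + (if a2 = \<infinity> then 0 else (cmod (snd z))\<^sup>2 / real_of_ereal a2) < 1}"

definition Ell4 :: "C2 set set" where
  "Ell4 = {ellipsoid a1 a2 | a1 a2. 0 < a1 \<and> ereal a1 \<le> a2}"

definition ell_morphism :: "C2 set \<Rightarrow> C2 set \<Rightarrow> bool" where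
  "ell_morphism U V \<longleftrightarrow> U \<in> Ell4 \<and> V \<in> Ell4 \<and> (\<exists>\<phi>. symplectomorphism \<phi> \<and> \<phi> ` U \<subseteq> V)"

text \<open>Generalized symplectic capacity on Ell4 (values on non-ellipsoids are irrelevant).\<close>
definition gen_capacity :: "(C2 set \<Rightarrow> ennreal) \<Rightarrow> bool" where
  "gen_capacity c \<longleftrightarrow>
     (\<forall>U V. ell_morphism U V \<longrightarrow> c U \<le> c V) \<and>
     (\<forall>U\<in>Ell4. \<forall>\<alpha>::real. \<alpha> > 0 \<longrightarrow> c ((\<lambda>z. \<alpha> *\<^sub>R z) ` U) = ennreal (\<alpha>\<^sup>2) * c U)"

definition normalized_capacity :: "(C2 set \<Rightarrow> ennreal) \<Rightarrow> bool" where
  "normalized_capacity c \<longleftrightarrow> gen_capacity c \<and> c (ellipsoid 1 1) = 1"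

definition EH_count :: "real \<Rightarrow> ereal \<Rightarrow> real \<Rightarrow> nat" where
  "EH_count a1 a2 t = card {(i::nat, j::nat). i \<in> {1,2} \<and> 1 \<le> j \<and>
      ereal (real j * pi) * (if i = 1 then ereal a1 else a2) \<le> ereal t}"

text \<open>k-th term d_k of the increasing sequence (with repetitions).\<close>
definition EH_capacity :: "nat \<Rightarrow> real \<Rightarrow> ereal \<Rightarrow> real" where
  "EH_capacity k a1 a2 = Inf {t. k \<le> EH_count a1 a2 t}"

definition cbar :: "nat \<Rightarrow> real \<Rightarrow> real" where
  "cbar k a = EH_capacity k a 1 / (real ((k + 1) div 2) * pi)"

definition level_set :: "nat \<Rightarrow> nat \<Rightarrow> real set" where
  "level_set k l = {a \<in> {0<..1}. cbar k a = real l / real ((k + 1) div 2)}"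

definition a_end :: "nat \<Rightarrow> nat \<Rightarrow> real" where "a_end k l = Inf (level_set k l)"
definition b_end :: "nat \<Rightarrow> nat \<Rightarrow> real" where "b_end k l = Sup (level_set k l)"

end

theory Submission
  imports Defs
begin


lemma iter_id: "iter_dderiv vs (\<lambda>x::C2. x) = (\<lambda>x. x) \<or> (\<exists>c. iter_dderiv vs (\<lambda>x::C2. x) = (\<lambda>x. c))"
proof (induction vs)
  case Nil then show ?case by simp
next
  case (Cons v vs)
  show ?case
  proof (cases "iter_dderiv vs (\<lambda>x::C2. x) = (\<lambda>x. x)")
    case True
    have "\<And>x. frechet_derivative (\<lambda>x. x) (at x) = (\<lambda>x::C2. x)"
      using frechet_derivative_at[OF has_derivative_ident, symmetric] by blast
    then have "iter_dderiv (v # vs) (\<lambda>x::C2. x) = (\<lambda>x. v)" using True by simp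
    then show ?thesis by blast
  next
    case False
    then obtain c where c: "iter_dderiv vs (\<lambda>x::C2. x) = (\<lambda>x. c)" using Cons by blast
    have "\<And>x. frechet_derivative (\<lambda>x. c) (at x) = (\<lambda>x::C2. 0::C2)"
      by (metis frechet_derivative_at has_derivative_const)
    then have "iter_dderiv (v # vs) (\<lambda>x::C2. x) = (\<lambda>x. 0)" using c by simp
    then show ?thesis by blast
  qed
qed

lemma smooth_id: "smooth_map (id::C2\<Rightarrow>C2)"
  unfolding smooth_map_def
proof (intro allI)
  fix vs x
  show "iter_dderiv vs (id::C2\<Rightarrow>C2) differentiable at x"
    using iter_id[of vs] unfolding id_def by auto
qed

lemma symp_id: "symplectomorphism id"
proof -
  have "\<And>x. frechet_derivative id (at x) = (id::C2\<Rightarrow>C2)"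
    by (metis frechet_derivative_at has_derivative_id id_def)
  then show ?thesis unfolding symplectomorphism_def using smooth_id by simp
qed

lemma ell_in: "0 < a \<Longrightarrow> a \<le> 1 \<Longrightarrow> ellipsoid a 1 \<in> Ell4"
  unfolding Ell4_def by (rule CollectI, rule exI[of _ a], rule exI[of _ 1]) simp

lemma ell2_in: "0 < a \<Longrightarrow> a \<le> 1 \<Longrightarrow> ellipsoid 1 (ereal (1/a)) \<in> Ell4"
  unfolding Ell4_def by (rule CollectI, rule exI[of _ 1], rule exI[of _ "ereal (1/a)"]) simp

lemma ell_sub: "0 < a \<Longrightarrow> a \<le> a' \<Longrightarrow> ellipsoid a 1 \<subseteq> ellipsoid a' 1"
proof
  fix z assume "0 < a" "a \<le> a'" "z \<in> ellipsoid a 1"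
  moreover have "(cmod (fst z))\<^sup>2 / a' \<le> (cmod (fst z))\<^sup>2 / a"
    using \<open>0 < a\<close> \<open>a \<le> a'\<close> by (simp add: frac_le)
  ultimately show "z \<in> ellipsoid a' 1" unfolding ellipsoid_def by simp
qed

lemma ell2_sub: "0 < a \<Longrightarrow> a \<le> a' \<Longrightarrow> ellipsoid 1 (ereal (1/a')) \<subseteq> ellipsoid 1 (ereal (1/a))"
proof
  fix z assume "0 < a" "a \<le> a'" "z \<in> ellipsoid 1 (ereal (1/a'))"
  moreover have "(cmod (snd z))\<^sup>2 * a \<le> (cmod (snd z))\<^sup>2 * a'"
    using \<open>0 < a\<close> \<open>a \<le> a'\<close> by (simp add: mult_left_mono)
  ultimately show "z \<in> ellipsoid 1 (ereal (1/a))" unfolding ellipsoid_def by simp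
qed

lemma scale_ell: assumes "0 < a"
  shows "(\<lambda>z. sqrt a *\<^sub>R z) ` ellipsoid 1 (ereal (1/a)) = ellipsoid a 1"
proof
  have sa: "(sqrt a)\<^sup>2 = a" using assms by simp
  show "(\<lambda>z. sqrt a *\<^sub>R z) ` ellipsoid 1 (ereal (1/a)) \<subseteq> ellipsoid a 1"
  proof
    fix y assume "y \<in> (\<lambda>z. sqrt a *\<^sub>R z) ` ellipsoid 1 (ereal (1/a))"
    then obtain z where y: "y = sqrt a *\<^sub>R z" and z: "z \<in> ellipsoid 1 (ereal (1/a))" by blast
    have "(cmod (fst y))\<^sup>2 = a * (cmod (fst z))\<^sup>2" "(cmod (snd y))\<^sup>2 = a * (cmod (snd z))\<^sup>2"
      using assms by (simp_all add: y power_mult_distrib)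
    moreover have "a * ((cmod (fst z))\<^sup>2 + a * (cmod (snd z))\<^sup>2) < a * 1"
      using z assms unfolding ellipsoid_def by (intro mult_strict_left_mono) (simp_all add: field_simps)
    ultimately show "y \<in> ellipsoid a 1" using z assms unfolding ellipsoid_def by (simp add: field_simps)
  qed
  show "ellipsoid a 1 \<subseteq> (\<lambda>z. sqrt a *\<^sub>R z) ` ellipsoid 1 (ereal (1/a))"
  proof
    fix y assume y: "y \<in> ellipsoid a 1"
    define z where "z = (1 / sqrt a) *\<^sub>R y"
    have yz: "y = sqrt a *\<^sub>R z" using assms by (simp add: z_def)
    have "(cmod (fst y))\<^sup>2 = a * (cmod (fst z))\<^sup>2" "(cmod (snd y))\<^sup>2 = a * (cmod (snd z))\<^sup>2"
      using assms by (simp_all add: yz power_mult_distrib)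
    moreover have "a * ((cmod (fst z))\<^sup>2 + a * (cmod (snd z))\<^sup>2) < a * 1"
      using y assms calculation unfolding ellipsoid_def by (simp add: field_simps)
    ultimately have "(cmod (fst z))\<^sup>2 + a * (cmod (snd z))\<^sup>2 < 1"
      using assms mult_less_cancel_left_pos by blast
    then have "z \<in> ellipsoid 1 (ereal (1/a))" using assms unfolding ellipsoid_def by (simp add: field_simps)
    then show "y \<in> (\<lambda>z. sqrt a *\<^sub>R z) ` ellipsoid 1 (ereal (1/a))" using yz by blast
  qed
qed

lemma cap_mono: assumes "normalized_capacity c" "0 < a" "a \<le> a'" "a' \<le> 1"
  shows "c (ellipsoid a 1) \<le> c (ellipsoid a' 1)"
proof -
  have "ell_morphism (ellipsoid a 1) (ellipsoid a' 1)"
    unfolding ell_morphism_def using assms ell_in ell_sub symp_id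
    by (metis dual_order.trans id_apply image_id less_le_trans order_refl)
  then show ?thesis using assms(1) unfolding normalized_capacity_def gen_capacity_def by blast
qed

lemma cap_h: assumes "normalized_capacity c" "0 < a" "a \<le> 1"
  shows "c (ellipsoid a 1) = ennreal a * c (ellipsoid 1 (ereal (1/a)))"
proof -
  have "c ((\<lambda>z. sqrt a *\<^sub>R z) ` ellipsoid 1 (ereal (1/a))) = ennreal ((sqrt a)\<^sup>2) * c (ellipsoid 1 (ereal (1/a)))"
    using assms ell2_in unfolding normalized_capacity_def gen_capacity_def by simp
  then show ?thesis using scale_ell[OF assms(2)] assms by simp
qed

lemma h_anti: assumes "normalized_capacity c" "0 < a" "a \<le> a'" "a' \<le> 1"
  shows "c (ellipsoid 1 (ereal (1/a'))) \<le> c (ellipsoid 1 (ereal (1/a)))"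
proof -
  have "ell_morphism (ellipsoid 1 (ereal (1/a'))) (ellipsoid 1 (ereal (1/a)))"
    unfolding ell_morphism_def using assms ell2_in ell2_sub symp_id
    by (metis dual_order.trans id_apply image_id less_le_trans order_refl)
  then show ?thesis using assms(1) unfolding normalized_capacity_def gen_capacity_def by blast
qed



lemma EH_set_eq: "{(i::nat, j::nat). i \<in> {1,2} \<and> 1 \<le> j \<and>
      ereal (real j * pi) * (if i = 1 then ereal a else 1) \<le> ereal t}
   = {(i, j). (i = 1 \<and> 1 \<le> j \<and> real j * pi * a \<le> t) \<or> (i = 2 \<and> 1 \<le> j \<and> real j * pi \<le> t)}"
  by auto

lemma fin_nat_le: "finite {j::nat. real j \<le> X}"
proof -
  have "{j::nat. real j \<le> X} \<subseteq> {..nat \<lceil>X\<rceil>}"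
  proof
    fix j assume "j \<in> {j::nat. real j \<le> X}"
    then have "real j \<le> X" by simp
    then have "real j \<le> real_of_int \<lceil>X\<rceil>" using le_of_int_ceiling[of X] by linarith
    then have "int j \<le> \<lceil>X\<rceil>" by (metis of_int_of_nat_eq of_int_le_iff)
    then show "j \<in> {..nat \<lceil>X\<rceil>}" by simp
  qed
  then show ?thesis using finite_subset by blast
qed

lemma count_char:
  assumes a: "0 < a" and k: "1 \<le> k"
  shows "k \<le> EH_count a 1 t \<longleftrightarrow> (\<exists>n\<le>k. real n * pi \<le> t \<and> real (k-n) * pi * a \<le> t)"
proof -
  define S where "S = {(i::nat, j::nat). (i = 1 \<and> 1 \<le> j \<and> real j * pi * a \<le> t) \<or> (i = 2 \<and> 1 \<le> j \<and> real j * pi \<le> t)}"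
  have cnt: "EH_count a 1 t = card S" unfolding EH_count_def S_def EH_set_eq ..
  have "S \<subseteq> {1,2} \<times> ({j. real j \<le> t/(pi*a)} \<union> {j. real j \<le> t/pi})"
    unfolding S_def using a by (auto simp: field_simps)
  then have finS: "finite S" using fin_nat_le by (meson finite_SigmaI finite_Un finite_insert finite.emptyI finite_subset)
  show ?thesis
  proof
    assume "k \<le> EH_count a 1 t"
    then have kS: "k \<le> card S" using cnt by simp
    show "\<exists>n\<le>k. real n * pi \<le> t \<and> real (k-n) * pi * a \<le> t"
    proof (rule ccontr)
      assume no: "\<not> ?thesis"
      show False
      proof (cases "t < 0")
        case True
        have "x \<notin> S" for x
        proof
          assume "x \<in> S"
          then obtain i j where "(i = 1 \<and> 1 \<le> j \<and> real j * pi * a \<le> t) \<or> (i = 2 \<and> 1 \<le> j \<and> real j * pi \<le> t)"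
            unfolding S_def by auto
          moreover have "0 \<le> real j * pi * a" "0 \<le> real j * pi" using a by auto
          ultimately show False using True by linarith
        qed
        then have "S = {}" by blast
        then show False using kS k by simp
      next
        case False
        define N where "N = nat \<lfloor>t/pi\<rfloor>"
        have f0: "0 \<le> \<lfloor>t/pi\<rfloor>" using False by simp
        have rN: "real N = of_int \<lfloor>t/pi\<rfloor>" using f0 unfolding N_def by simp
        have "real N \<le> t/pi" unfolding rN by (rule of_int_floor_le)
        then have N1: "real N * pi \<le> t" by (simp add: pos_le_divide_eq)
        have "t/pi < real N + 1" unfolding rN by (rule real_of_int_floor_add_one_gt)
        then have N2: "t < (real N + 1) * pi" by (simp add: pos_divide_less_eq)
        show False
        proof (cases "k \<le> N")
          case True
          have "real k * pi \<le> real N * pi" using True by simp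
          then have "real k * pi \<le> t" using N1 by linarith
          then have "\<exists>n\<le>k. real n * pi \<le> t \<and> real (k-n) * pi * a \<le> t"
            using False by (intro exI[of _ k]) simp
          then show False using no by blast
        next
        case kN: False
          have "\<not> (real N * pi \<le> t \<and> real (k-N) * pi * a \<le> t)" using no kN by auto
          then have hk: "real (k - N) * pi * a > t" using N1 by linarith
          have "S \<subseteq> {1} \<times> {1..<k-N} \<union> {2} \<times> {1..N}"
          proof
            fix x assume "x \<in> S"
            then obtain i j where x: "x = (i,j)" and h': "1 \<le> j"
              "i = 1 \<and> real j * pi * a \<le> t \<or> i = 2 \<and> real j * pi \<le> t" unfolding S_def by auto
            have h: "real (k - N) * pi * a > t" "1 \<le> j"
              "i = Suc 0 \<and> real j * pi * a \<le> t \<or> i = 2 \<and> real j * pi \<le> t" using hk h' by auto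
            have "i = Suc 0 \<and> j < k - N \<or> i = 2 \<and> j \<le> N"
            proof (cases "i = Suc 0")
              case True
              then have "real j * pi * a \<le> t" using h by auto
              then have "real j * pi * a < real (k-N) * pi * a" using h by linarith
              then have "real j < real (k-N)" using a by (simp add: mult_less_cancel_right)
              then show ?thesis using True by linarith
            next
              case False
              then have "real j * pi \<le> t" using h by auto
              then have "real j * pi < (real N + 1) * pi" using N2 by linarith
              then have "real j < real N + 1" by (simp add: mult_less_cancel_right)
              then show ?thesis using False h by linarith
            qed
            then show "x \<in> {1} \<times> {1..<k-N} \<union> {2} \<times> {1..N}" using x h by auto
          qed
          then have "card S \<le> card ({1::nat} \<times> {1..<k-N} \<union> {2} \<times> {1..N})"
            by (intro card_mono) auto
          also have "\<dots> \<le> card ({1::nat} \<times> {1..<k-N}) + card ({2::nat} \<times> {1..N})" by (rule card_Un_le)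
          also have "\<dots> = (k - N - 1) + N" by (simp add: card_cartesian_product_singleton)
          finally show False using kS kN by linarith
        qed
      qed
    qed
  next
    assume "\<exists>n\<le>k. real n * pi \<le> t \<and> real (k-n) * pi * a \<le> t"
    then obtain n where n: "n \<le> k" "real n * pi \<le> t" "real (k-n) * pi * a \<le> t" by blast
    have sub: "{1::nat} \<times> {1..k-n} \<union> {2} \<times> {1..n} \<subseteq> S"
    proof
      fix x assume "x \<in> {1::nat} \<times> {1..k-n} \<union> {2} \<times> {1..n}"
      then obtain i j where x: "x = (i,j)" and h: "(i = 1 \<and> 1 \<le> j \<and> j \<le> k-n) \<or> (i = 2 \<and> 1 \<le> j \<and> j \<le> n)" by auto
      show "x \<in> S"
      proof (cases "i = 1")
        case True
        have "real j * pi * a \<le> real (k-n) * pi * a" using h True a by (simp add: mult_right_mono)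
        then have "real j * pi * a \<le> t" using n(3) by linarith
        then show ?thesis using True h n x unfolding S_def by auto
      next
        case False
        have "real j * pi \<le> real n * pi" using h False by (simp add: mult_right_mono)
        then have "real j * pi \<le> t" using n(2) by linarith
        then show ?thesis using False h n x unfolding S_def by auto
      qed
    qed
    have "card ({1::nat} \<times> {1..k-n} \<union> {2} \<times> {1..n}) = (k-n) + n"
      by (subst card_Un_disjoint) (auto simp: card_cartesian_product_singleton)
    then have "k \<le> card S" using card_mono[OF finS sub] n by simp
    then show "k \<le> EH_count a 1 t" using cnt by simp
  qed
qed

definition G :: "nat \<Rightarrow> real \<Rightarrow> real" where
  "G k a = Min ((\<lambda>n. max (real (k-n) * a) (real n)) ` {..k})"

lemma G_le: "n \<le> k \<Longrightarrow> G k a \<le> max (real (k-n) * a) (real n)"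
  unfolding G_def by (rule Min_le) auto

lemma G_ge: "(\<And>n. n \<le> k \<Longrightarrow> x \<le> max (real (k-n) * a) (real n)) \<Longrightarrow> x \<le> G k a"
  unfolding G_def by (subst Min_ge_iff) auto

lemma G_att: "\<exists>n\<le>k. G k a = max (real (k-n) * a) (real n)"
proof -
  have "G k a \<in> (\<lambda>n. max (real (k-n) * a) (real n)) ` {..k}"
    unfolding G_def by (rule Min_in) auto
  then show ?thesis by auto
qed

lemma EH_G: assumes "0 < a" "1 \<le> k" shows "EH_capacity k a 1 = pi * G k a"
proof -
  have "k \<le> EH_count a 1 t \<longleftrightarrow> pi * G k a \<le> t" for t
  proof
    assume "k \<le> EH_count a 1 t"
    then obtain n where n: "n\<le>k" "real n * pi \<le> t" "real (k-n) * pi * a \<le> t"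
      using count_char assms by blast
    have "G k a \<le> max (real (k-n) * a) (real n)" using G_le n by blast
    also have "\<dots> \<le> t / pi" using n by (simp add: pos_le_divide_eq ac_simps)
    finally show "pi * G k a \<le> t" by (simp add: pos_le_divide_eq mult.commute)
  next
    assume t: "pi * G k a \<le> t"
    obtain n where n: "n \<le> k" "G k a = max (real (k-n) * a) (real n)" using G_att by blast
    have m: "pi * max (real (k-n) * a) (real n) \<le> t" using t n by simp
    have "pi * (real (k-n) * a) \<le> pi * max (real (k-n) * a) (real n)" by (intro mult_left_mono) auto
    then have m2: "pi * (real (k-n) * a) \<le> t" using m by linarith
    have "pi * real n \<le> pi * max (real (k-n) * a) (real n)" by (intro mult_left_mono) auto
    then have m1: "pi * real n \<le> t" using m by linarith
    have "real n * pi \<le> t" using m1 by (simp only: ac_simps)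
    moreover have "real (k-n) * pi * a \<le> t" using m2 by (simp only: ac_simps)
    ultimately have "real n * pi \<le> t \<and> real (k-n) * pi * a \<le> t" by blast
    then show "k \<le> EH_count a 1 t" using count_char assms n by blast
  qed
  then have "{t. k \<le> EH_count a 1 t} = {pi * G k a..}" by auto
  then show ?thesis unfolding EH_capacity_def by simp
qed

lemma cbar_G: assumes "0 < a" "1 \<le> k" shows "cbar k a = G k a / real ((k+1) div 2)"
  unfolding cbar_def using EH_G[OF assms] by simp



lemma level_G: assumes "1 \<le> k"
  shows "level_set k l = {a \<in> {0<..1}. G k a = real l}"
proof -
  have m: "real ((k+1) div 2) > 0" using assms by simp
  show ?thesis unfolding level_set_def using cbar_G[OF _ assms] m
    by (auto simp: divide_cancel_right)
qed

lemma a_end_eq: assumes k: "1 \<le> k" and l: "1 \<le> l" "l \<le> (k+1) div 2"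
  shows "a_end k l = real l / (real k - real l + 1)"
    "a_end k l \<in> level_set k l"
proof -
  define D where "D = real k - real l + 1"
  have lk: "l \<le> k" using l by linarith
  have D: "D \<ge> 1" using lk unfolding D_def by simp
  have lD: "real l \<le> D" using l unfolding D_def by linarith
  define x0 where "x0 = real l / D"
  have x0pos: "0 < x0" using l D unfolding x0_def by simp
  have x0le: "x0 \<le> 1" using lD D unfolding x0_def by simp
  have Dx0: "D * x0 = real l" using D unfolding x0_def by simp
  have "G k x0 \<le> max (real (k-l) * x0) (real l)" using G_le lk by blast
  moreover have "real (k-l) * x0 \<le> real l"
  proof -
    have "real (k-l) * x0 = (D - 1) * x0" using lk unfolding D_def by (simp add: of_nat_diff)
    also have "\<dots> \<le> D * x0" using x0pos by simp
    finally show ?thesis using Dx0 by simp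
  qed
  ultimately have G1: "G k x0 \<le> real l" by simp
  have G2: "real l \<le> G k x0"
  proof (rule G_ge)
    fix n assume n: "n \<le> k"
    show "real l \<le> max (real (k-n) * x0) (real n)"
    proof (cases "l \<le> n")
      case True then show ?thesis by simp
    next
      case False
      have "D \<le> real (k-n)" using False n unfolding D_def by (simp add: of_nat_diff)
      then have "D * x0 \<le> real (k-n) * x0" using x0pos by (simp add: mult_right_mono)
      then show ?thesis using Dx0 by simp
    qed
  qed
  have mem: "x0 \<in> level_set k l" unfolding level_G[OF k] using x0pos x0le G1 G2 by simp
  have lb: "x0 \<le> x" if "x \<in> level_set k l" for x
  proof -
    have x: "0 < x" "G k x = real l" using that unfolding level_G[OF k] by auto
    have g: "G k x \<le> max (real (k-(l-1)) * x) (real (l-1))" using G_le lk by (meson diff_le_self le_trans)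
    have e1: "real (k-(l-1)) = D" and e2: "real (l-1) = real l - 1" using l lk unfolding D_def by (simp_all add: of_nat_diff)
    from g have "G k x \<le> max (D * x) (real l - 1)" by (simp only: e1 e2)
    then have "real l \<le> D * x" using x by (auto simp: max_def split: if_splits)
    then show ?thesis unfolding x0_def using D by (simp add: pos_divide_le_eq mult.commute)
  qed
  have "a_end k l = x0" unfolding a_end_def by (rule cInf_eq_minimum[OF mem lb])
  then show "a_end k l = real l / (real k - real l + 1)" "a_end k l \<in> level_set k l"
    using mem unfolding x0_def D_def by auto
qed

lemma b_end_eq: assumes k: "1 \<le> k" and l: "1 \<le> l" "l \<le> k div 2"
  shows "b_end k l = real l / (real k - real l)"
    "b_end k l \<in> level_set k l"
proof -
  define E where "E = real k - real l"
  have lk: "l \<le> k" using l by linarith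
  have lE: "real l \<le> E" using l unfolding E_def by linarith
  have E: "E \<ge> 1" using lE l by linarith
  define x0 where "x0 = real l / E"
  have x0pos: "0 < x0" using l E unfolding x0_def by simp
  have x0le: "x0 \<le> 1" using lE E unfolding x0_def by simp
  have Ex0: "E * x0 = real l" using E unfolding x0_def by simp
  have rkl: "real (k-l) = E" using lk unfolding E_def by (simp add: of_nat_diff)
  have "G k x0 \<le> max (real (k-l) * x0) (real l)" using G_le lk by blast
  then have G1: "G k x0 \<le> real l" using rkl Ex0 by simp
  have G2: "real l \<le> G k x0"
  proof (rule G_ge)
    fix n assume n: "n \<le> k"
    show "real l \<le> max (real (k-n) * x0) (real n)"
    proof (cases "l \<le> n")
      case True then show ?thesis by simp
    next
      case False
      have "E \<le> real (k-n)" using False n unfolding E_def by (simp add: of_nat_diff)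
      then have "E * x0 \<le> real (k-n) * x0" using x0pos by (simp add: mult_right_mono)
      then show ?thesis using Ex0 by simp
    qed
  qed
  have mem: "x0 \<in> level_set k l" unfolding level_G[OF k] using x0pos x0le G1 G2 by simp
  have ub: "x \<le> x0" if "x \<in> level_set k l" for x
  proof (rule ccontr)
    assume "\<not> x \<le> x0"
    then have xg: "x0 < x" by simp
    have x: "0 < x" "G k x = real l" using that unfolding level_G[OF k] by auto
    have Ex: "real l < E * x" using Ex0 xg E by (metis mult_strict_left_mono less_le_trans zero_less_one)
    obtain n where n: "n \<le> k" "G k x = max (real (k-n) * x) (real n)" using G_att by blast
    show False
    proof (cases "n \<le> l")
      case True
      have "E \<le> real (k-n)" using True n unfolding E_def by (simp add: of_nat_diff)
      then have "E * x \<le> real (k-n) * x" using x by (simp add: mult_right_mono)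
      then show False using Ex n x by linarith
    next
      case False
      then show False using n x by simp
    qed
  qed
  have "b_end k l = x0" unfolding b_end_def by (rule cSup_eq_maximum[OF mem ub])
  then show "b_end k l = real l / (real k - real l)" "b_end k l \<in> level_set k l"
    using mem unfolding x0_def E_def by auto
qed

lemma choose_l: assumes k: "1 \<le> k" and a: "0 < a" "a \<le> 1"
  shows "\<exists>l. 1 \<le> l \<and> l \<le> (k+1) div 2 \<and> G k a \<le> real l \<and> G k a \<le> (real k - real l + 1) * a"
proof -
  define m where "m = (k+1) div 2"
  have m1: "1 \<le> m" "m \<le> k" "real k \<le> 2 * real m" using k unfolding m_def by linarith+
  obtain n0 where n0: "n0 \<le> k" "G k a = max (real (k-n0) * a) (real n0)" using G_att by blast
  have r0: "real (k-n0) = real k - real n0" using n0 by (simp add: of_nat_diff)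
  have Gm: "G k a \<le> real m"
  proof -
    have "G k a \<le> max (real (k-m) * a) (real m)" using G_le m1 by blast
    moreover have "real (k-m) * a \<le> real (k-m)" using a by (simp add: mult_left_le)
    moreover have "real (k-m) \<le> real m" using m1 by (simp add: of_nat_diff)
    ultimately show ?thesis by linarith
  qed
  show ?thesis
  proof (cases "(real k - real n0) * a \<le> real n0")
    case True
    have Gn: "G k a = real n0" using n0 r0 True by simp
    have n1: "1 \<le> n0"
    proof (rule ccontr)
      assume "\<not> 1 \<le> n0"
      then have "n0 = 0" by simp
      moreover have "0 < real k * a" using a k by simp
      ultimately show False using True by simp
    qed
    have g: "G k a \<le> max (real (k-(n0-1)) * a) (real (n0-1))" using G_le n0 by (meson diff_le_self le_trans)
    have e1: "real (k-(n0-1)) = real k - real n0 + 1" and e2: "real (n0-1) = real n0 - 1"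
      using n1 n0 by (simp_all add: of_nat_diff)
    from g have "G k a \<le> max ((real k - real n0 + 1) * a) (real n0 - 1)" by (simp only: e1 e2)
    then have "G k a \<le> (real k - real n0 + 1) * a" using Gn by (auto simp: max_def split: if_splits)
    moreover have "n0 \<le> m" using Gm Gn by simp
    ultimately show ?thesis using n1 Gn unfolding m_def by (intro exI[of _ n0]) auto
  next
    case False
    have Gn: "G k a = (real k - real n0) * a" using n0 r0 False by simp
    have nk: "n0 < k" using False n0 a by (cases "n0 = k") auto
    show ?thesis
    proof (cases "n0 + 1 \<le> m")
      case True
      have g: "G k a \<le> max (real (k-(n0+1)) * a) (real (n0+1))" by (rule G_le) (use nk in simp)
      have e: "real (k-(n0+1)) = real k - real n0 - 1" using nk by (simp add: of_nat_diff)
      from g have g2: "G k a \<le> max ((real k - real n0 - 1) * a) (real (n0+1))" by (simp only: e)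
      have "(real k - real n0 - 1) * a < (real k - real n0) * a" using a by (simp add: algebra_simps)
      then have "G k a \<le> real (n0+1)" using Gn g2 by (auto simp: max_def split: if_splits)
      then show ?thesis using True Gn unfolding m_def by (intro exI[of _ "n0+1"]) auto
    next
      case False
      have "(real k - real n0) * a \<le> (real k - real m + 1) * a" using False a by (intro mult_right_mono) auto
      then have "1 \<le> m \<and> m \<le> (k+1) div 2 \<and> G k a \<le> real m \<and> G k a \<le> (real k - real m + 1) * a"
        using Gm Gn m1 m_def by simp
      then show ?thesis by blast
    qed
  qed
qed



lemma ennreal_cancel_le: assumes "0 < x" "ennreal z \<le> ennreal x * y" "0 \<le> w" "z = x * w"
  shows "ennreal w \<le> y"
proof -
  have "ennreal x * ennreal w \<le> ennreal x * y" using assms by (simp add: ennreal_mult)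
  then show ?thesis using assms(1) ennreal_mult_le_mult_iff[of "ennreal x"] by simp
qed

lemma ennreal_cancel_ge: assumes "0 < x" "ennreal x * y \<le> ennreal z" "0 \<le> w" "z = x * w"
  shows "y \<le> ennreal w"
proof -
  have "ennreal x * y \<le> ennreal x * ennreal w" using assms by (simp add: ennreal_mult)
  then show ?thesis using assms(1) ennreal_mult_le_mult_iff[of "ennreal x"] by simp
qed

lemma part_a:
  fixes k :: nat
  assumes k: "1 \<le> k" and c: "normalized_capacity c"
    and hyp: "\<forall>l\<in>{1..(k + 1) div 2}. ennreal (cbar k (a_end k l)) \<le> c (ellipsoid (a_end k l) 1)"
    and a: "a \<in> {0<..1}"
  shows "ennreal (cbar k a) \<le> c (ellipsoid a 1)"
proof -
  define m where "m = (k+1) div 2"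
  have m0: "real m > 0" using k unfolding m_def by simp
  have a0: "0 < a" "a \<le> 1" using a by auto
  obtain l where l: "1 \<le> l" "l \<le> m" "G k a \<le> real l" "G k a \<le> (real k - real l + 1) * a"
    using choose_l[OF k a0] unfolding m_def by blast
  have lk: "l \<le> k" using l k unfolding m_def by linarith
  define D where "D = real k - real l + 1"
  have D: "D \<ge> 1" using lk unfolding D_def by simp
  define al where "al = real l / D"
  have al: "a_end k l = al" "al \<in> level_set k l" using a_end_eq[OF k l(1)] l(2) unfolding m_def al_def D_def by auto
  have al0: "0 < al" "al \<le> 1" using al(2) unfolding level_set_def by auto
  have cbal: "cbar k al = real l / real m" using al(2) unfolding level_set_def m_def by simp
  have lin: "l \<in> {1..(k + 1) div 2}" using l unfolding m_def by simp
  have h1: "ennreal (real l / real m) \<le> c (ellipsoid al 1)"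
    using hyp[rule_format, OF lin] unfolding al(1) cbal .
  have cba: "cbar k a = G k a / real m" using cbar_G[OF a0(1) k] unfolding m_def by simp
  show ?thesis
  proof (cases "al \<le> a")
    case True
    have "ennreal (cbar k a) \<le> ennreal (real l / real m)" unfolding cba using l m0
      by (intro ennreal_leI divide_right_mono) auto
    also have "\<dots> \<le> c (ellipsoid al 1)" by (rule h1)
    also have "\<dots> \<le> c (ellipsoid a 1)" using cap_mono[OF c al0(1) True a0(2)] .
    finally show ?thesis .
  next
    case False
    define h where "h x = c (ellipsoid 1 (ereal (1/x)))" for x
    have ch: "c (ellipsoid al 1) = ennreal al * h al" "c (ellipsoid a 1) = ennreal a * h a"
      using cap_h[OF c] al0 a0 unfolding h_def by auto
    have hh: "h al \<le> h a" using h_anti[OF c a0(1)] False al0 unfolding h_def by simp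
    have "real l / real m = al * (D / real m)" unfolding al_def using D by simp
    then have hal: "ennreal (D / real m) \<le> h al"
      using ennreal_cancel_le[OF al0(1), of "real l / real m" "h al" "D / real m"] h1 ch D m0 by simp
    have "G k a \<le> a * D" using l(4) unfolding D_def by (simp add: mult.commute)
    then have "G k a / real m \<le> a * D / real m" using m0 by (simp add: divide_right_mono)
    then have "ennreal (cbar k a) \<le> ennreal (a * (D / real m))" unfolding cba
      by (intro ennreal_leI) simp
    also have "\<dots> = ennreal a * ennreal (D / real m)" using a0 by (subst ennreal_mult'[symmetric]) simp_all
    also have "\<dots> \<le> ennreal a * h al" using hal by (simp add: mult_left_mono)
    also have "\<dots> \<le> ennreal a * h a" using hh by (simp add: mult_left_mono)
    finally show ?thesis using ch by simp
  qed
qed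



lemma part_b:
  fixes k :: nat
  assumes k: "1 \<le> k" and c: "normalized_capacity c"
    and hyp: "\<forall>l\<in>{1..k div 2}. c (ellipsoid (b_end k l) 1) \<le> ennreal (cbar k (b_end k l))"
    and lim: "((\<lambda>a. c (ellipsoid a 1) / ennreal a) \<longlongrightarrow> L) (at_right 0)"
    and L: "L \<le> ennreal (real k / real ((k + 1) div 2))"
    and a: "a \<in> {0<..1}"
  shows "c (ellipsoid a 1) \<le> ennreal (cbar k a)"
proof -
  define m where "m = (k+1) div 2"
  have m0: "real m > 0" using k unfolding m_def by simp
  have m1: "m \<le> k div 2 + 1" unfolding m_def by simp
  have a0: "0 < a" "a \<le> 1" using a by auto
  define h where "h x = c (ellipsoid 1 (ereal (1/x)))" for x
  have ch: "c (ellipsoid x 1) = ennreal x * h x" if "0 < x" "x \<le> 1" for x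
    using cap_h[OF c that] unfolding h_def by simp
  have hanti: "h y \<le> h x" if "0 < x" "x \<le> y" "y \<le> 1" for x y
    using h_anti[OF c that] unfolding h_def by simp
  have cba: "cbar k a = G k a / real m" using cbar_G[OF a0(1) k] unfolding m_def by simp
  have hL: "h a \<le> L"
  proof (rule tendsto_le[OF trivial_limit_at_right_real lim tendsto_const])
    show "\<forall>\<^sub>F x in at_right 0. h a \<le> c (ellipsoid x 1) / ennreal x"
      unfolding eventually_at_right_field
    proof (intro exI[of _ a] conjI allI impI)
      fix x :: real assume x: "0 < x" "x < a"
      have "c (ellipsoid x 1) / ennreal x = h x * ennreal x / ennreal x"
        using ch[of x] x a0 by (simp add: mult.commute)
      also have "\<dots> = h x" using x by (intro ennreal_mult_divide_eq) auto
      finally show "h a \<le> c (ellipsoid x 1) / ennreal x" using hanti[of x a] x a0 by simp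
    qed (use a0 in simp)
  qed
  have bound: "c (ellipsoid a 1) \<le> ennreal (max (real (k-n) * a) (real n) / real m)" if n: "n \<le> k" for n
  proof (cases "n = 0")
    case True
    have "c (ellipsoid a 1) = ennreal a * h a" using ch a0 by simp
    also have "\<dots> \<le> ennreal a * ennreal (real k / real m)" using hL L unfolding m_def
      by (intro mult_left_mono) auto
    also have "\<dots> = ennreal (real k * a / real m)" using a0 by (subst ennreal_mult'[symmetric]) (simp_all add: mult.commute)
    also have "\<dots> \<le> ennreal (max (real (k-n) * a) (real n) / real m)" using True m0
      by (intro ennreal_leI divide_right_mono) auto
    finally show ?thesis .
  next
    case False
    show ?thesis
    proof (cases "n \<le> k div 2")
      case True
      have n1: "1 \<le> n" using False by simp
      define E where "E = real k - real n"
      have E1: "E \<ge> 1" "real n \<le> E" using True n1 unfolding E_def by linarith+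
      have rkn: "real (k-n) = E" using n unfolding E_def by (simp add: of_nat_diff)
      define b where "b = real n / E"
      have b: "b_end k n = b" "b \<in> level_set k n" using b_end_eq[OF k n1 True] unfolding b_def E_def by auto
      have b0: "0 < b" "b \<le> 1" using b(2) unfolding level_set_def by auto
      have cbb: "cbar k b = real n / real m" using b(2) unfolding level_set_def m_def by simp
      have nin: "n \<in> {1..k div 2}" using n1 True by simp
      have h1: "c (ellipsoid b 1) \<le> ennreal (real n / real m)"
        using hyp[rule_format, OF nin] unfolding b(1) cbb .
      show ?thesis
      proof (cases "a \<le> b")
        case True
        have "c (ellipsoid a 1) \<le> c (ellipsoid b 1)" using cap_mono[OF c a0(1) True b0(2)] .
        also have "\<dots> \<le> ennreal (real n / real m)" by (rule h1)
        also have "\<dots> \<le> ennreal (max (real (k-n) * a) (real n) / real m)" using m0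
          by (intro ennreal_leI divide_right_mono) auto
        finally show ?thesis .
      next
        case False
        have "real n / real m = b * (E / real m)" unfolding b_def using E1 by simp
        then have hb: "h b \<le> ennreal (E / real m)"
          using ennreal_cancel_ge[OF b0(1), of "h b" "real n / real m" "E / real m"] h1 ch[OF b0] E1 m0 by simp
        have "c (ellipsoid a 1) = ennreal a * h a" using ch a0 by simp
        also have "\<dots> \<le> ennreal a * h b" using hanti[of b a] b0 False a0 by (simp add: mult_left_mono)
        also have "\<dots> \<le> ennreal a * ennreal (E / real m)" using hb by (simp add: mult_left_mono)
        also have "\<dots> = ennreal (E * a / real m)" using a0 by (subst ennreal_mult'[symmetric]) (simp_all add: mult.commute)
        also have "\<dots> \<le> ennreal (max (real (k-n) * a) (real n) / real m)" using rkn m0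
          by (intro ennreal_leI divide_right_mono) auto
        finally show ?thesis .
      qed
    next
      case False
      have nm: "m \<le> n" using False m1 by linarith
      have "c (ellipsoid a 1) \<le> c (ellipsoid 1 1)" using cap_mono[OF c a0(1) a0(2)] by simp
      also have "\<dots> = 1" using c unfolding normalized_capacity_def by simp
      also have "\<dots> \<le> ennreal (max (real (k-n) * a) (real n) / real m)"
      proof -
        have "1 \<le> real n / real m" using nm m0 by simp
        also have "\<dots> \<le> max (real (k-n) * a) (real n) / real m" using m0 by (intro divide_right_mono) auto
        finally show ?thesis by simp
      qed
      finally show ?thesis .
    qed
  qed
  obtain n0 where n0: "n0 \<le> k" "G k a = max (real (k-n0) * a) (real n0)" using G_att by blast
  show ?thesis using bound[OF n0(1)] unfolding cba n0(2) .
qed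


theorem mainTheorem8:
  fixes k :: nat
  assumes "1 \<le> k"
  shows "(\<forall>c. normalized_capacity c \<and>
            (\<forall>l\<in>{1..(k + 1) div 2}. ennreal (cbar k (a_end k l)) \<le> c (ellipsoid (a_end k l) 1))
          \<longrightarrow> (\<forall>a\<in>{0<..1}. ennreal (cbar k a) \<le> c (ellipsoid a 1)))
       \<and> (\<forall>c. normalized_capacity c \<and>
            (\<forall>l\<in>{1..k div 2}. c (ellipsoid (b_end k l) 1) \<le> ennreal (cbar k (b_end k l))) \<and>
            (\<exists>L. ((\<lambda>a. c (ellipsoid a 1) / ennreal a) \<longlongrightarrow> L) (at_right 0) \<and>
                 L \<le> ennreal (real k / real ((k + 1) div 2)))
          \<longrightarrow> (\<forall>a\<in>{0<..1}. c (ellipsoid a 1) \<le> ennreal (cbar k a)))"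
  using part_a[OF assms] part_b[OF assms] by blast

end
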